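(* Let $n\ge 3$ and $m\ge 5$ be integers, let $\delta\in\{0,\dots,n-1\}$ with $\gcd(1+\delta,n)=1$, and let $G=\langle x\rangle$ be cyclic of order $n$. Let $\Delta$ be the graph with vertex set $G\times\{0,\dots,m-1\}$ (write $g_i=(g,i)$, $G_i=G\times\{i\}$) whose edges are exactly the following: there are no edges inside $G_0$ or inside $G_3$; $G_1$ and $G_2$ each induce complete graphs; for $i\in\{4,\dots,m-1\}$ the edges inside $G_i$ are $\{g_i,(xg)_i\}$, $g\in G$; $g_0\sim g'_2$ iff $g\ne g'$; $g_2\sim g'_3$ iff $g=g'$; $g_3\sim g'_{m-1}$ iff $g\ne g'$; $g_1\sim g'_4$ iff $g\ne g'$; for $\ell\in\{4,\dots,m-2\}$, $g_\ell\sim g'_{\ell+1}$ iff $g\ne g'$; $g_0\sim g'_3$ for all $g,g'$; $g_0\sim g'_1$ iff $g'g^{-1}=x$; $g_1\sim g'_2$ iff $g'g^{-1}=x^\delta$. Identifying each $g\in G$ with the permutation $y_i\mapsto(yg)_i$ of the vertex set, $\mathrm{Aut}(\Delta)=G$. Consequently, every cyclic group of order at least $3$ admits an $m$-GRR for every $m\ge 5$.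
   Context: An $m$-GRR for a group $G$ is a finite regular simple graph having a semiregular group of automorphisms isomorphic to $G$ with exactly $m$ vertex-orbits and whose full automorphism group is isomorphic to $G$. *)

theory Defs
  imports "HOL-Algebra.Algebra"
begin

definition simple_graph :: "'v set \<Rightarrow> ('v \<Rightarrow> 'v \<Rightarrow> bool) \<Rightarrow> bool" where
  "simple_graph V E \<longleftrightarrow> finite V \<and> (\<forall>u v. E u v \<longrightarrow> u \<in> V \<and> v \<in> V)
     \<and> (\<forall>u v. E u v \<longrightarrow> E v u) \<and> (\<forall>v. \<not> E v v)"

definition regular_graph :: "'v set \<Rightarrow> ('v \<Rightarrow> 'v \<Rightarrow> bool) \<Rightarrow> bool" where
  "regular_graph V E \<longleftrightarrow> (\<exists>k. \<forall>v\<in>V. card {u \<in> V. E v u} = k)"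

definition graph_auts :: "'v set \<Rightarrow> ('v \<Rightarrow> 'v \<Rightarrow> bool) \<Rightarrow> ('v \<Rightarrow> 'v) set" where
  "graph_auts V E = {f \<in> Bij V. \<forall>u\<in>V. \<forall>v\<in>V. E (f u) (f v) \<longleftrightarrow> E u v}"

definition Aut_group :: "'v set \<Rightarrow> ('v \<Rightarrow> 'v \<Rightarrow> bool) \<Rightarrow> ('v \<Rightarrow> 'v) monoid" where
  "Aut_group V E = (BijGroup V)\<lparr>carrier := graph_auts V E\<rparr>"

definition semiregular_on :: "'v set \<Rightarrow> ('v \<Rightarrow> 'v) set \<Rightarrow> bool" where
  "semiregular_on V H \<longleftrightarrow> (\<forall>h\<in>H. \<forall>v\<in>V. h v = v \<longrightarrow> h = (\<lambda>x\<in>V. x))"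

definition is_mGRR :: "nat \<Rightarrow> ('a, 'b) monoid_scheme \<Rightarrow> 'v set \<Rightarrow> ('v \<Rightarrow> 'v \<Rightarrow> bool) \<Rightarrow> bool" where
  "is_mGRR m G V E \<longleftrightarrow> simple_graph V E \<and> regular_graph V E \<and>
     (\<exists>H. subgroup H (Aut_group V E) \<and> semiregular_on V H \<and>
          card (orbits ((Aut_group V E)\<lparr>carrier := H\<rparr>) V (\<lambda>h v. h v)) = m \<and>
          (Aut_group V E)\<lparr>carrier := H\<rparr> \<cong> G) \<and>
     Aut_group V E \<cong> G"

text \<open>G = <x> cyclic of order n is modelled as Z/nZ = {0..<n} with x = 1 (additively);
  the vertex (g,i) is g_i. Delta_rel lists each edge {(a,i),(b,j)} with i \<le> j.\<close>

definition Delta_rel :: "nat \<Rightarrow> nat \<Rightarrow> nat \<Rightarrow> nat \<times> nat \<Rightarrow> nat \<times> nat \<Rightarrow> bool" where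
  "Delta_rel n m \<delta> u v = (case (u, v) of ((a, i), (b, j)) \<Rightarrow>
     a < n \<and> b < n \<and> i < m \<and> j < m \<and>
     ((i = 1 \<and> j = 1 \<and> a \<noteq> b) \<or>
      (i = 2 \<and> j = 2 \<and> a \<noteq> b) \<or>
      (4 \<le> i \<and> i = j \<and> b = (a + 1) mod n) \<or>
      (i = 0 \<and> j = 2 \<and> a \<noteq> b) \<or>
      (i = 2 \<and> j = 3 \<and> a = b) \<or>
      (i = 3 \<and> j = m - 1 \<and> a \<noteq> b) \<or>
      (i = 1 \<and> j = 4 \<and> a \<noteq> b) \<or>
      (4 \<le> i \<and> i \<le> m - 2 \<and> j = i + 1 \<and> a \<noteq> b) \<or>
      (i = 0 \<and> j = 3) \<or>
      (i = 0 \<and> j = 1 \<and> b = (a + 1) mod n) \<or>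
      (i = 1 \<and> j = 2 \<and> b = (a + \<delta>) mod n)))"

definition Delta_adj :: "nat \<Rightarrow> nat \<Rightarrow> nat \<Rightarrow> nat \<times> nat \<Rightarrow> nat \<times> nat \<Rightarrow> bool" where
  "Delta_adj n m \<delta> u v \<longleftrightarrow> Delta_rel n m \<delta> u v \<or> Delta_rel n m \<delta> v u"

definition Delta_verts :: "nat \<Rightarrow> nat \<Rightarrow> (nat \<times> nat) set" where
  "Delta_verts n m = {0..<n} \<times> {0..<m}"

definition right_transl :: "nat \<Rightarrow> nat \<Rightarrow> nat \<Rightarrow> nat \<times> nat \<Rightarrow> nat \<times> nat" where
  "right_transl n m g = (\<lambda>(y, i) \<in> Delta_verts n m. ((y + g) mod n, i))"

end

theory Submission
  imports Defs
begin

lemma rel_iff: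
  "Delta_rel n m d (a,i) (b,j) \<longleftrightarrow> a<n \<and> b<n \<and> i<m \<and> j<m \<and>
     ((i = 1 \<and> j = 1 \<and> a \<noteq> b) \<or>
      (i = 2 \<and> j = 2 \<and> a \<noteq> b) \<or>
      (4 \<le> i \<and> i = j \<and> b = (a + 1) mod n) \<or>
      (i = 0 \<and> j = 2 \<and> a \<noteq> b) \<or>
      (i = 2 \<and> j = 3 \<and> a = b) \<or>
      (i = 3 \<and> j = m - 1 \<and> a \<noteq> b) \<or>
      (i = 1 \<and> j = 4 \<and> a \<noteq> b) \<or>
      (4 \<le> i \<and> i \<le> m - 2 \<and> j = i + 1 \<and> a \<noteq> b) \<or>
      (i = 0 \<and> j = 3) \<or>
      (i = 0 \<and> j = 1 \<and> b = (a + 1) mod n) \<or>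
      (i = 1 \<and> j = 2 \<and> b = (a + d) mod n))"
  unfolding Delta_rel_def by simp

context fixes n m d :: nat assumes m5: "m \<ge> 5"
begin
lemma adj0: "Delta_adj n m d (a,0) (b,j) \<longleftrightarrow> a<n \<and> b<n \<and> (j=1 \<and> b=(a+1) mod n \<or> j=2 \<and> a\<noteq>b \<or> j=3)"
  unfolding Delta_adj_def rel_iff using m5 by auto
lemma adj1: "Delta_adj n m d (a,1) (b,j) \<longleftrightarrow> a<n \<and> b<n \<and> (j=0 \<and> a=(b+1) mod n \<or> j=1 \<and> a\<noteq>b \<or> j=2 \<and> b=(a+d) mod n \<or> j=4 \<and> a\<noteq>b)"
  unfolding Delta_adj_def rel_iff using m5 by auto
lemma adj2: "Delta_adj n m d (a,2) (b,j) \<longleftrightarrow> a<n \<and> b<n \<and> (j=0 \<and> a\<noteq>b \<or> j=1 \<and> a=(b+d) mod n \<or> j=2 \<and> a\<noteq>b \<or> j=3 \<and> a=b)"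
  unfolding Delta_adj_def rel_iff using m5 by auto
lemma adj3: "Delta_adj n m d (a,3) (b,j) \<longleftrightarrow> a<n \<and> b<n \<and> (j=0 \<or> j=2 \<and> a=b \<or> j=m-1 \<and> a\<noteq>b)"
  unfolding Delta_adj_def rel_iff using m5 by auto
lemma adj4: "4 \<le> i \<Longrightarrow> i < m \<Longrightarrow> Delta_adj n m d (a,i) (b,j) \<longleftrightarrow> a<n \<and> b<n \<and>
   (j=i \<and> (b=(a+1) mod n \<or> a=(b+1) mod n) \<or> j=i+1 \<and> j<m \<and> a\<noteq>b \<or> (j+1 = i \<and> i\<ge>5 \<and> a\<noteq>b)
    \<or> (i=4 \<and> j=1 \<and> a\<noteq>b) \<or> (i=m-1 \<and> j=3 \<and> a\<noteq>b))"
  unfolding Delta_adj_def rel_iff using m5 by auto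
end

lemma add_mod_ne: "0<k \<Longrightarrow> k<(n::nat) \<Longrightarrow> (a+k) mod n \<noteq> a mod n"
proof
  assume k: "0<k" "k<n" and e: "(a+k) mod n = a mod n"
  define r where "r = a mod n"
  have rn: "r < n" using k by (simp add: r_def)
  have "(r + k) mod n = r" using e by (simp add: r_def mod_add_left_eq)
  show False
  proof (cases "r + k < n")
    case True
    then show False using \<open>(r + k) mod n = r\<close> k by simp
  next
    case False
    then have "(r+k) mod n = r + k - n"
      using rn k by (simp add: le_mod_geq)
    then show False using \<open>(r + k) mod n = r\<close> k rn False by simp
  qed
qed

lemma mod_eq_lt: "a < (n::nat) \<Longrightarrow> a mod n = a" by simp

lemma pm1: "a < (n::nat) \<Longrightarrow> ((a + n - 1) mod n + 1) mod n = a"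
proof -
  assume a: "a<n"
  have "((a + n - 1) mod n + 1) mod n = (a + n - 1 + 1) mod n" by (simp add: mod_Suc_eq)
  also have "\<dots> = (a + n) mod n" using a by simp
  finally show ?thesis using a by simp
qed

lemma pm2: "a < (n::nat) \<Longrightarrow> ((a + 1) mod n + n - 1) mod n = a"
proof -
  assume a: "a<n"
  have "((a + 1) mod n + n - 1) mod n = ((a + 1) mod n + (n - 1)) mod n" using a by simp
  also have "\<dots> = (a + 1 + (n - 1)) mod n" by (simp add: mod_add_left_eq)
  also have "\<dots> = (a + n) mod n" using a by simp
  finally show ?thesis using a by simp
qed

lemma pred_iff: "a < (n::nat) \<Longrightarrow> b < n \<Longrightarrow> a = (b+1) mod n \<longleftrightarrow> b = (a+n-1) mod n"
  using pm1 pm2 by metis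

lemma suc_ne: "2 \<le> (n::nat) \<Longrightarrow> a < n \<Longrightarrow> (a+1) mod n \<noteq> a"
  using add_mod_ne[of 1 n a] by simp

lemma pred_ne: "2 \<le> (n::nat) \<Longrightarrow> a < n \<Longrightarrow> (a+n-1) mod n \<noteq> a"
  using add_mod_ne[of "n-1" n a] by simp

lemma suc_ne_pred: "3 \<le> (n::nat) \<Longrightarrow> a < n \<Longrightarrow> (a+1) mod n \<noteq> (a+n-1) mod n"
proof -
  assume n: "3 \<le> n" and a: "a<n"
  have "(a+n-1+2) mod n \<noteq> (a+n-1) mod n" using add_mod_ne[of 2 n "a+n-1"] n by simp
  moreover have "a+n-1+2 = (a+1) + n" using n by simp
  moreover have "((a+1) + n) mod n = (a+1) mod n" by (rule mod_add_self2)
  ultimately show ?thesis by metis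
qed

lemma third: "(n::nat) \<ge> 3 \<Longrightarrow> \<exists>c<n. c \<noteq> a \<and> c \<noteq> b"
proof -
  assume "n \<ge> 3"
  have "\<exists>c\<in>{0,1,2::nat}. c \<noteq> a \<and> c \<noteq> b" by auto
  then show ?thesis using \<open>n\<ge>3\<close> by force
qed

lemma cyc_other: "(n::nat) \<ge> 3 \<Longrightarrow> a < n \<Longrightarrow> \<exists>c. (c = (a+1) mod n \<or> c = (a+n-1) mod n) \<and> c \<noteq> b"
  using suc_ne_pred by metis

lemma adj_sym: "Delta_adj n m d u v = Delta_adj n m d v u"
  unfolding Delta_adj_def by auto

lemma adj_V: "Delta_adj n m d (a,i) (b,j) \<Longrightarrow> a<n \<and> b<n \<and> i<m \<and> j<m"
  unfolding Delta_adj_def rel_iff by auto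

lemma add_mod_ne': "0<k \<Longrightarrow> k<(n::nat) \<Longrightarrow> b < n \<Longrightarrow> (b+k) mod n \<noteq> b"
  using add_mod_ne[of k n b] by simp

definition ZG :: "'v set \<Rightarrow> ('v \<Rightarrow> 'v \<Rightarrow> bool) \<Rightarrow> 'v \<Rightarrow> bool" where
  "ZG V E v \<longleftrightarrow> (\<exists>u\<in>V. E v u \<and> \<not>(\<exists>w\<in>V. E v w \<and> E u w))"
definition C1G :: "'v set \<Rightarrow> ('v \<Rightarrow> 'v \<Rightarrow> bool) \<Rightarrow> 'v \<Rightarrow> bool" where
  "C1G V E v \<longleftrightarrow> \<not> ZG V E v \<and> (\<exists>w\<in>V. E v w \<and> ZG V E w \<and> (\<forall>w'\<in>V. E v w' \<and> ZG V E w' \<longrightarrow> w' = w))"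
definition P0G :: "'v set \<Rightarrow> ('v \<Rightarrow> 'v \<Rightarrow> bool) \<Rightarrow> 'v \<Rightarrow> bool" where
  "P0G V E v \<longleftrightarrow> ZG V E v \<and> (\<exists>u\<in>V. E v u \<and> C1G V E u)"

lemma C1G_alt: assumes "\<forall>x\<in>V. ZG V E x \<longleftrightarrow> Q x" "v\<in>V"
  shows "C1G V E v \<longleftrightarrow> \<not> Q v \<and> (\<exists>w\<in>V. E v w \<and> Q w \<and> (\<forall>w'\<in>V. E v w' \<and> Q w' \<longrightarrow> w' = w))"
  using assms unfolding C1G_def by blast

lemma P0G_alt: assumes "\<forall>x\<in>V. ZG V E x \<longleftrightarrow> Q x" "\<forall>x\<in>V. C1G V E x \<longleftrightarrow> R x" "v\<in>V"
  shows "P0G V E v \<longleftrightarrow> Q v \<and> (\<exists>u\<in>V. E v u \<and> R u)"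
  using assms unfolding P0G_def by blast

context fixes n m d :: nat assumes n3: "3 \<le> n" and m5: "5 \<le> m" and dn: "d + 1 < n"
begin

lemma d_ne_pred: "a < n \<Longrightarrow> (a+d) mod n \<noteq> (a+n-1) mod n"
proof -
  assume a: "a<n"
  have "(a+n-1+(d+1)) mod n \<noteq> (a+n-1) mod n" using add_mod_ne[of "d+1" n "a+n-1"] dn by simp
  moreover have "a+n-1+(d+1) = (a+d) + n" using n3 by simp
  moreover have "((a+d) + n) mod n = (a+d) mod n" by (rule mod_add_self2)
  ultimately show ?thesis by metis
qed

lemma sd_ne: "b < n \<Longrightarrow> ((b+1) mod n + d) mod n \<noteq> b"
proof -
  assume b: "b<n"
  have "((b+1) mod n + d) mod n = (b + (d+1)) mod n" by (simp add: mod_add_left_eq)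
  then show ?thesis using add_mod_ne'[of "d+1" n b] dn b by simp
qed

lemmas adjs = adj0[OF m5, unfolded One_nat_def] adj1[OF m5, unfolded One_nat_def] adj2[OF m5, unfolded One_nat_def] adj3[OF m5, unfolded One_nat_def] adj4[OF m5, unfolded One_nat_def]

lemma nz_common:
  assumes e: "Delta_adj n m d (a,i) (b,j)" and i0: "i\<noteq>0" and i3: "i\<noteq>3"
  shows "\<exists>w. Delta_adj n m d (a,i) w \<and> Delta_adj n m d (b,j) w"
proof -
  have ab: "a<n" "b<n" "i<m" "j<m" using adj_V[OF e] by auto
  consider "i=1" | "i=2" | "4\<le>i" using i0 i3 by arith
  then show ?thesis
  proof cases
    case 1
    then consider "j=0 \<and> a=(b+1) mod n" | "j=1 \<and> a\<noteq>b" | "j=2 \<and> b=(a+d) mod n" | "j=4 \<and> a\<noteq>b"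
      using e by (auto simp: adjs One_nat_def)
    then show ?thesis
    proof cases
      case 1
      then show ?thesis using \<open>i=1\<close> ab sd_ne[of b]
        by (rule_tac x="((a+d) mod n, 2)" in exI) (auto simp: adjs One_nat_def)
    next
      case 2
      obtain c where "c<n" "c\<noteq>a" "c\<noteq>b" using third n3 by blast
      then show ?thesis using 2 \<open>i=1\<close> ab
        by (rule_tac x="(c, 4)" in exI) (auto simp: adjs One_nat_def)
    next
      case 3
      then show ?thesis using \<open>i=1\<close> ab d_ne_pred[of a] pm1[of a n]
        by (rule_tac x="((a+n-1) mod n, 0)" in exI) (auto simp: adjs One_nat_def)
    next
      case 4
      obtain c where "c<n" "c\<noteq>a" "c\<noteq>b" using third n3 by blast
      then show ?thesis using 4 \<open>i=1\<close> ab
        by (rule_tac x="(c, 1)" in exI) (auto simp: adjs One_nat_def)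
    qed
  next
    case 2
    then consider "j=0 \<and> a\<noteq>b" | "j=1 \<and> a=(b+d) mod n" | "j=2 \<and> a\<noteq>b" | "j=3 \<and> a=b"
      using e by (auto simp: adjs One_nat_def)
    then show ?thesis
    proof cases
      case 1
      obtain c where "c<n" "c\<noteq>a" "c\<noteq>b" using third n3 by blast
      then show ?thesis using 1 \<open>i=2\<close> ab
        by (rule_tac x="(c, 2)" in exI) (auto simp: adjs One_nat_def)
    next
      case 2
      then show ?thesis using \<open>i=2\<close> ab d_ne_pred[of b] pm1[of b n]
        by (rule_tac x="((b+n-1) mod n, 0)" in exI) (auto simp: adjs One_nat_def)
    next
      case 3
      obtain c where "c<n" "c\<noteq>a" "c\<noteq>b" using third n3 by blast
      then show ?thesis using 3 \<open>i=2\<close> ab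
        by (rule_tac x="(c, 0)" in exI) (auto simp: adjs One_nat_def)
    next
      case 4
      obtain c where "c<n" "c\<noteq>a" "c\<noteq>b" using third n3 by blast
      then show ?thesis using 4 \<open>i=2\<close> ab
        by (rule_tac x="(c, 0)" in exI) (auto simp: adjs One_nat_def)
    qed
  next
    case 3
    define lo where "lo = (if i = 4 then 1 else i - 1)"
    have lo: "Delta_adj n m d (a,i) (c,lo) \<longleftrightarrow> c<n \<and> c\<noteq>a" for c
      using 3 ab unfolding lo_def by (auto simp: adjs One_nat_def)
    show ?thesis
    proof (cases "j = i")
      case True
      then have ba: "b\<noteq>a" using e ab 3 suc_ne[of n a] suc_ne[of n b] n3 by (auto simp: adjs One_nat_def)
      obtain c where "c<n" "c\<noteq>a" "c\<noteq>b" using third n3 by blast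
      then have "Delta_adj n m d (a,i) (c,lo)" "Delta_adj n m d (b,j) (c,lo)"
        using lo[of c] lo[of c] True ab ba 3 by (auto simp: lo_def adjs One_nat_def)
      then show ?thesis by blast
    next
      case False
      then have ba: "b\<noteq>a" and jj: "j = i+1 \<or> j+1 = i \<or> j = 1 \<or> j = 3"
        using e ab 3 by (auto simp: adjs One_nat_def)
      obtain c where c: "(c = (a+1) mod n \<or> c = (a+n-1) mod n) \<and> c \<noteq> b"
        using cyc_other n3 ab by blast
      have cn: "c < n" using c n3 by auto
      have "Delta_adj n m d (a,i) (c,i)" using c ab 3 pm1[of a n] by (auto simp: adjs One_nat_def)
      moreover have "Delta_adj n m d (b,j) (c,i)"
        using e ab 3 c cn False by (auto simp: adjs One_nat_def adj_sym[of n m d "(b,j)"])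
      ultimately show ?thesis by blast
    qed
  qed
qed


lemma verts_mem: "(a,i) \<in> Delta_verts n m \<longleftrightarrow> a < n \<and> i < m"
  by (simp add: Delta_verts_def)

lemma Z_iff: assumes v: "(a,i) \<in> Delta_verts n m"
  shows "ZG (Delta_verts n m) (Delta_adj n m d) (a,i) \<longleftrightarrow> i = 0 \<or> i = 3"
proof
  assume z: "ZG (Delta_verts n m) (Delta_adj n m d) (a,i)"
  show "i = 0 \<or> i = 3"
  proof (rule ccontr)
    assume "\<not> (i = 0 \<or> i = 3)"
    then have "i \<noteq> 0" "i \<noteq> 3" by auto
    from z obtain u where u: "u \<in> Delta_verts n m" "Delta_adj n m d (a,i) u"
       and no: "\<not>(\<exists>w\<in>Delta_verts n m. Delta_adj n m d (a,i) w \<and> Delta_adj n m d u w)"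
      unfolding ZG_def by blast
    obtain b j where uu: "u = (b,j)" by (cases u)
    obtain w where w: "Delta_adj n m d (a,i) w" "Delta_adj n m d (b,j) w"
      using nz_common[of a i b j] u uu \<open>i\<noteq>0\<close> \<open>i\<noteq>3\<close> by blast
    obtain c k where ww: "w = (c,k)" by (cases w)
    have "w \<in> Delta_verts n m" using adj_V[of n m d a i c k] w ww verts_mem by blast
    then show False using no w uu by blast
  qed
next
  assume i: "i = 0 \<or> i = 3"
  have an: "a < n" "i < m" using v verts_mem by auto
  show "ZG (Delta_verts n m) (Delta_adj n m d) (a,i)"
    unfolding ZG_def
  proof (rule bexI[where x="(a, 3 - i)"], intro conjI)
    show "(a, 3 - i) \<in> Delta_verts n m" using an m5 by (simp add: verts_mem)
    show "Delta_adj n m d (a, i) (a, 3 - i)" using i an by (auto simp: adjs)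
    show "\<not> (\<exists>w\<in>Delta_verts n m. Delta_adj n m d (a, i) w \<and> Delta_adj n m d (a, 3 - i) w)"
    proof
      assume "\<exists>w\<in>Delta_verts n m. Delta_adj n m d (a, i) w \<and> Delta_adj n m d (a, 3 - i) w"
      then obtain c k where "Delta_adj n m d (a, i) (c,k)" "Delta_adj n m d (a, 3 - i) (c,k)" by auto
      then show False using i m5 by (auto simp: adjs)
    qed
  qed
qed

lemma Z_iff': "v \<in> Delta_verts n m \<Longrightarrow> ZG (Delta_verts n m) (Delta_adj n m d) v \<longleftrightarrow> snd v = 0 \<or> snd v = 3"
  using Z_iff by (cases v) auto

lemma C1_iff: assumes v: "(a,i) \<in> Delta_verts n m"
  shows "C1G (Delta_verts n m) (Delta_adj n m d) (a,i) \<longleftrightarrow> i = 1"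
proof -
  have an: "a < n" "i < m" using v verts_mem by auto
  have eq: "C1G (Delta_verts n m) (Delta_adj n m d) (a,i) \<longleftrightarrow> \<not>(i = 0 \<or> i = 3) \<and>
     (\<exists>w\<in>Delta_verts n m. Delta_adj n m d (a,i) w \<and> (snd w = 0 \<or> snd w = 3) \<and>
        (\<forall>w'\<in>Delta_verts n m. Delta_adj n m d (a,i) w' \<and> (snd w' = 0 \<or> snd w' = 3) \<longrightarrow> w' = w))"
    using C1G_alt[of "Delta_verts n m" "Delta_adj n m d" "\<lambda>x. snd x = 0 \<or> snd x = 3" "(a,i)"] v Z_iff'
    by simp
  show ?thesis
  proof
    assume c: "C1G (Delta_verts n m) (Delta_adj n m d) (a,i)"
    then have i03: "i \<noteq> 0" "i \<noteq> 3" using eq by auto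
    from c eq obtain w where w: "w\<in>Delta_verts n m" "Delta_adj n m d (a,i) w" "snd w = 0 \<or> snd w = 3"
       and uq: "\<And>w'. w'\<in>Delta_verts n m \<Longrightarrow> Delta_adj n m d (a,i) w' \<Longrightarrow> snd w' = 0 \<or> snd w' = 3 \<Longrightarrow> w' = w"
      by blast
    obtain c k where ww: "w = (c,k)" by (cases w)
    show "i = 1"
    proof (rule ccontr)
      assume i1: "i \<noteq> 1"
      consider "i = 2" | "4 \<le> i" "i = m - 1" | "4 \<le> i" "i \<noteq> m - 1" using i03 i1 by arith
      then show False
      proof cases
        case 1
        have "(a,3) = w" by (rule uq) (use 1 an m5 in \<open>auto simp: adjs verts_mem\<close>)
        moreover have "((a+1) mod n, 0) = w" by (rule uq) (use 1 an m5 suc_ne[of n a] n3 in \<open>auto simp: adjs verts_mem\<close>)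
        ultimately show False by auto
      next
        case 2
        have "((a+1) mod n,3) = w" by (rule uq) (use 2 an m5 suc_ne[of n a] n3 in \<open>auto simp: adjs verts_mem\<close>)
        moreover have "((a+n-1) mod n, 3) = w" by (rule uq) (use 2 an m5 pred_ne[of n a] n3 in \<open>auto simp: adjs verts_mem\<close>)
        ultimately show False using suc_ne_pred[of n a] n3 an by auto
      next
        case 3
        then show False using w ww an by (auto simp: adjs)
      qed
    qed
  next
    assume i1: "i = 1"
    have X: "\<not>(i = 0 \<or> i = 3)" using i1 by auto
    have Y: "Delta_adj n m d (a,i) ((a+n-1) mod n, 0)" using i1 an pm1[of a n] n3 by (auto simp: adjs)
    have W: "((a+n-1) mod n, 0) \<in> Delta_verts n m" using n3 m5 by (auto simp: verts_mem)
    have Z: "w' = ((a+n-1) mod n, 0)" if "w'\<in>Delta_verts n m" "Delta_adj n m d (a,i) w'" "snd w' = 0 \<or> snd w' = 3" for w'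
    proof -
      obtain c k where ww: "w' = (c,k)" by (cases w')
      then have "k = 0" "a = (c+1) mod n" "c < n" using that i1 by (auto simp: adjs)
      then show ?thesis using ww pred_iff[of a n c] an by auto
    qed
    have "\<exists>w\<in>Delta_verts n m. Delta_adj n m d (a,i) w \<and> (snd w = 0 \<or> snd w = 3) \<and>
        (\<forall>w'\<in>Delta_verts n m. Delta_adj n m d (a,i) w' \<and> (snd w' = 0 \<or> snd w' = 3) \<longrightarrow> w' = w)"
      apply (rule bexI[OF _ W])
      using Y Z by simp
    then show "C1G (Delta_verts n m) (Delta_adj n m d) (a,i)" using eq X by blast
  qed
qed

lemma C1_iff': "v \<in> Delta_verts n m \<Longrightarrow> C1G (Delta_verts n m) (Delta_adj n m d) v \<longleftrightarrow> snd v = 1"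
  using C1_iff by (cases v) auto

lemma P0_iff: assumes v: "(a,i) \<in> Delta_verts n m"
  shows "P0G (Delta_verts n m) (Delta_adj n m d) (a,i) \<longleftrightarrow> i = 0"
proof -
  have an: "a < n" "i < m" using v verts_mem by auto
  have eq: "P0G (Delta_verts n m) (Delta_adj n m d) (a,i) \<longleftrightarrow> (i = 0 \<or> i = 3) \<and>
     (\<exists>u\<in>Delta_verts n m. Delta_adj n m d (a,i) u \<and> snd u = 1)"
    using P0G_alt[of "Delta_verts n m" "Delta_adj n m d" "\<lambda>x. snd x = 0 \<or> snd x = 3" "\<lambda>x. snd x = 1" "(a,i)"] v Z_iff' C1_iff'
    by simp
  show ?thesis
  proof
    assume "P0G (Delta_verts n m) (Delta_adj n m d) (a,i)"
    then obtain u where "(i = 0 \<or> i = 3)" "Delta_adj n m d (a,i) u" "snd u = 1" using eq by blast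
    then show "i = 0" using m5 by (cases u) (auto simp: adjs)
  next
    assume i: "i = 0"
    have "Delta_adj n m d (a,i) ((a+1) mod n, 1)" using i an by (auto simp: adjs)
    moreover have "((a+1) mod n, 1) \<in> Delta_verts n m" using n3 m5 by (auto simp: verts_mem)
    ultimately show "P0G (Delta_verts n m) (Delta_adj n m d) (a,i)" using eq i by fastforce
  qed
qed

lemma P0_iff': "v \<in> Delta_verts n m \<Longrightarrow> P0G (Delta_verts n m) (Delta_adj n m d) v \<longleftrightarrow> snd v = 0"
  using P0_iff by (cases v) auto
end

lemma aut_ext: "f \<in> graph_auts V E \<Longrightarrow> f \<in> extensional V"
  unfolding graph_auts_def Bij_def by auto
lemma aut_bij: "f \<in> graph_auts V E \<Longrightarrow> bij_betw f V V"
  unfolding graph_auts_def Bij_def by auto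
lemma aut_img: "f \<in> graph_auts V E \<Longrightarrow> f ` V = V"
  using aut_bij bij_betw_imp_surj_on by blast
lemma aut_in: "f \<in> graph_auts V E \<Longrightarrow> v \<in> V \<Longrightarrow> f v \<in> V"
  using aut_img by blast
lemma aut_inj: "f \<in> graph_auts V E \<Longrightarrow> u \<in> V \<Longrightarrow> v \<in> V \<Longrightarrow> f u = f v \<longleftrightarrow> u = v"
  using aut_bij bij_betw_imp_inj_on inj_on_eq_iff by metis
lemma aut_adj: "f \<in> graph_auts V E \<Longrightarrow> u \<in> V \<Longrightarrow> v \<in> V \<Longrightarrow> E (f u) (f v) \<longleftrightarrow> E u v"
  unfolding graph_auts_def by auto
lemma aut_pre: "f \<in> graph_auts V E \<Longrightarrow> u \<in> V \<Longrightarrow> \<exists>u'\<in>V. u = f u'"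
  using aut_img by blast

lemma ex_tr: "f \<in> graph_auts V E \<Longrightarrow> (\<exists>u\<in>V. P u) \<longleftrightarrow> (\<exists>u\<in>V. P (f u))"
  using aut_pre aut_in by metis
lemma all_tr: "f \<in> graph_auts V E \<Longrightarrow> (\<forall>u\<in>V. P u) \<longleftrightarrow> (\<forall>u\<in>V. P (f u))"
  using aut_pre aut_in by metis

lemma ZG_inv: assumes f: "f \<in> graph_auts V E" and v: "v \<in> V"
  shows "ZG V E (f v) \<longleftrightarrow> ZG V E v"
proof
  assume "ZG V E (f v)"
  then obtain u where u: "u\<in>V" "E (f v) u" and H: "\<not>(\<exists>w\<in>V. E (f v) w \<and> E u w)"
    unfolding ZG_def by blast
  obtain u' where u': "u'\<in>V" "u = f u'" using aut_pre[OF f u(1)] by blast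
  have "E v u'" using u u' aut_adj[OF f v u'(1)] by simp
  moreover have "\<not>(\<exists>w\<in>V. E v w \<and> E u' w)"
  proof
    assume "\<exists>w\<in>V. E v w \<and> E u' w"
    then obtain w where "w\<in>V" "E v w" "E u' w" by blast
    then show False using H aut_in[OF f] aut_adj[OF f] v u' by blast
  qed
  ultimately show "ZG V E v" unfolding ZG_def using u' by blast
next
  assume "ZG V E v"
  then obtain u where u: "u\<in>V" "E v u" and H: "\<not>(\<exists>w\<in>V. E v w \<and> E u w)"
    unfolding ZG_def by blast
  have "E (f v) (f u)" using u aut_adj[OF f v u(1)] by simp
  moreover have "\<not>(\<exists>w\<in>V. E (f v) w \<and> E (f u) w)"
  proof
    assume "\<exists>w\<in>V. E (f v) w \<and> E (f u) w"
    then obtain w where w: "w\<in>V" "E (f v) w" "E (f u) w" by blast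
    obtain w' where w': "w'\<in>V" "w = f w'" using aut_pre[OF f w(1)] by blast
    show False using H w w' aut_adj[OF f] v u by blast
  qed
  ultimately show "ZG V E (f v)" unfolding ZG_def using u aut_in[OF f] by blast
qed

lemma C1G_inv: assumes f: "f \<in> graph_auts V E" and v: "v \<in> V"
  shows "C1G V E (f v) \<longleftrightarrow> C1G V E v"
proof
  assume "C1G V E (f v)"
  then obtain w where nz: "\<not> ZG V E (f v)" and w: "w\<in>V" "E (f v) w" "ZG V E w"
     and H: "\<forall>w'\<in>V. E (f v) w' \<and> ZG V E w' \<longrightarrow> w' = w"
    unfolding C1G_def by blast
  obtain u where u: "u\<in>V" "w = f u" using aut_pre[OF f w(1)] by blast
  have "\<not> ZG V E v" using nz ZG_inv[OF f v] by simp
  moreover have "E v u" "ZG V E u" using w u aut_adj[OF f v u(1)] ZG_inv[OF f u(1)] by auto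
  moreover have "\<forall>w'\<in>V. E v w' \<and> ZG V E w' \<longrightarrow> w' = u"
  proof (intro ballI impI)
    fix w' assume "w'\<in>V" "E v w' \<and> ZG V E w'"
    then have "f w' = w" using H aut_in[OF f] aut_adj[OF f v] ZG_inv[OF f] by blast
    then show "w' = u" using u aut_inj[OF f] \<open>w'\<in>V\<close> by blast
  qed
  ultimately show "C1G V E v" unfolding C1G_def using u by blast
next
  assume "C1G V E v"
  then obtain w where nz: "\<not> ZG V E v" and w: "w\<in>V" "E v w" "ZG V E w"
     and H: "\<forall>w'\<in>V. E v w' \<and> ZG V E w' \<longrightarrow> w' = w"
    unfolding C1G_def by blast
  have "\<not> ZG V E (f v)" using nz ZG_inv[OF f v] by simp
  moreover have "E (f v) (f w)" "ZG V E (f w)" using w aut_adj[OF f v w(1)] ZG_inv[OF f w(1)] by auto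
  moreover have "\<forall>w'\<in>V. E (f v) w' \<and> ZG V E w' \<longrightarrow> w' = f w"
  proof (intro ballI impI)
    fix w' assume w': "w'\<in>V" "E (f v) w' \<and> ZG V E w'"
    obtain u where u: "u\<in>V" "w' = f u" using aut_pre[OF f w'(1)] by blast
    have "E v u" "ZG V E u" using w' u aut_adj[OF f v u(1)] ZG_inv[OF f u(1)] by auto
    then have "u = w" using H u by blast
    then show "w' = f w" using u by simp
  qed
  ultimately show "C1G V E (f v)" unfolding C1G_def using w aut_in[OF f] by blast
qed

lemma P0G_inv: assumes f: "f \<in> graph_auts V E" and v: "v \<in> V"
  shows "P0G V E (f v) \<longleftrightarrow> P0G V E v"
proof
  assume "P0G V E (f v)"
  then obtain u where z: "ZG V E (f v)" and u: "u\<in>V" "E (f v) u" "C1G V E u"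
    unfolding P0G_def by blast
  obtain u' where u': "u'\<in>V" "u = f u'" using aut_pre[OF f u(1)] by blast
  show "P0G V E v" unfolding P0G_def
    using z u u' ZG_inv[OF f v] aut_adj[OF f v u'(1)] C1G_inv[OF f u'(1)] by auto
next
  assume "P0G V E v"
  then obtain u where z: "ZG V E v" and u: "u\<in>V" "E v u" "C1G V E u"
    unfolding P0G_def by blast
  show "P0G V E (f v)" unfolding P0G_def
    using z u ZG_inv[OF f v] aut_adj[OF f v u(1)] C1G_inv[OF f u(1)] aut_in[OF f u(1)] by auto
qed

lemma exQ_inv: assumes f: "f \<in> graph_auts V E" and v: "v \<in> V" and Q: "\<And>u. u \<in> V \<Longrightarrow> Q (f u) \<longleftrightarrow> Q u"
  shows "(\<exists>u\<in>V. Q u \<and> E u (f v)) \<longleftrightarrow> (\<exists>u\<in>V. Q u \<and> E u v)"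
proof
  assume "\<exists>u\<in>V. Q u \<and> E u (f v)"
  then obtain u where u: "u\<in>V" "Q u" "E u (f v)" by blast
  obtain u' where u': "u'\<in>V" "u = f u'" using aut_pre[OF f u(1)] by blast
  show "\<exists>u\<in>V. Q u \<and> E u v" using u u' Q[OF u'(1)] aut_adj[OF f u'(1) v] by auto
next
  assume "\<exists>u\<in>V. Q u \<and> E u v"
  then obtain u where u: "u\<in>V" "Q u" "E u v" by blast
  show "\<exists>u\<in>V. Q u \<and> E u (f v)" using u Q[OF u(1)] aut_adj[OF f u(1) v] aut_in[OF f u(1)] by auto
qed

lemma vmem: "(a,i) \<in> Delta_verts n m \<longleftrightarrow> a < n \<and> i < m"
  by (simp add: Delta_verts_def)

context fixes n m d :: nat assumes n3: "3 \<le> n" and m5: "5 \<le> m" and dn: "d + 1 < n"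
begin

lemmas adjs' = adj0[OF m5, unfolded One_nat_def] adj1[OF m5, unfolded One_nat_def] adj2[OF m5, unfolded One_nat_def] adj3[OF m5, unfolded One_nat_def] adj4[OF m5, unfolded One_nat_def]

lemma layer_basic:
  assumes f: "f \<in> graph_auts (Delta_verts n m) (Delta_adj n m d)" and v: "v \<in> Delta_verts n m"
  shows "snd (f v) = 0 \<longleftrightarrow> snd v = 0" "snd (f v) = 1 \<longleftrightarrow> snd v = 1" "snd (f v) = 3 \<longleftrightarrow> snd v = 3"
proof -
  have fv: "f v \<in> Delta_verts n m" using aut_in[OF f v] .
  show "snd (f v) = 0 \<longleftrightarrow> snd v = 0"
    using P0_iff'[OF n3 m5 dn v] P0_iff'[OF n3 m5 dn fv] P0G_inv[OF f v] by simp
  show "snd (f v) = 1 \<longleftrightarrow> snd v = 1"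
    using C1_iff'[OF n3 m5 dn v] C1_iff'[OF n3 m5 dn fv] C1G_inv[OF f v] by simp
  have "snd x = 3 \<longleftrightarrow> ZG (Delta_verts n m) (Delta_adj n m d) x \<and> \<not> P0G (Delta_verts n m) (Delta_adj n m d) x"
    if "x \<in> Delta_verts n m" for x
    using P0_iff'[OF n3 m5 dn that] Z_iff'[OF n3 m5 dn that] by auto
  then show "snd (f v) = 3 \<longleftrightarrow> snd v = 3"
    using v fv ZG_inv[OF f v] P0G_inv[OF f v] by simp
qed

lemma char2: assumes v: "v \<in> Delta_verts n m"
  shows "snd v = 2 \<longleftrightarrow> snd v \<noteq> 0 \<and> snd v \<noteq> 1 \<and> snd v \<noteq> 3 \<and>
     (\<exists>u\<in>Delta_verts n m. snd u = 0 \<and> Delta_adj n m d u v)"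
proof -
  obtain a i where vv: "v = (a,i)" by (cases v)
  have an: "a<n" "i<m" using v vv vmem by auto
  show ?thesis
  proof
    assume "snd v = 2"
    then have i: "i = 2" using vv by simp
    have "Delta_adj n m d ((a+1) mod n, 0) v" using vv i an suc_ne[of n a] n3 by (auto simp: adjs')
    moreover have "((a+1) mod n, 0) \<in> Delta_verts n m" using n3 m5 by (auto simp: vmem)
    ultimately have ex: "\<exists>u\<in>Delta_verts n m. snd u = 0 \<and> Delta_adj n m d u v" by force
    show "snd v \<noteq> 0 \<and> snd v \<noteq> 1 \<and> snd v \<noteq> 3 \<and>
     (\<exists>u\<in>Delta_verts n m. snd u = 0 \<and> Delta_adj n m d u v)" using i vv ex by simp
  next
    assume H: "snd v \<noteq> 0 \<and> snd v \<noteq> 1 \<and> snd v \<noteq> 3 \<and>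
     (\<exists>u\<in>Delta_verts n m. snd u = 0 \<and> Delta_adj n m d u v)"
    then obtain b where "Delta_adj n m d (b,0) (a,i)" using vv by (metis prod.collapse)
    then show "snd v = 2" using H vv by (auto simp: adjs')
  qed
qed

definition pl :: "nat \<Rightarrow> nat" where "pl k = (if k = 4 then 1 else k - 1)"

lemma chark: assumes v: "v \<in> Delta_verts n m" and k: "4 \<le> k" "k < m"
  shows "snd v = k \<longleftrightarrow> k \<le> snd v \<and> (\<exists>u\<in>Delta_verts n m. snd u = pl k \<and> Delta_adj n m d u v)"
proof -
  obtain a i where vv: "v = (a,i)" by (cases v)
  have an: "a<n" "i<m" using v vv vmem by auto
  show ?thesis
  proof
    assume "snd v = k"
    then have i: "i = k" using vv by simp
    have "Delta_adj n m d ((a+1) mod n, pl k) v"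
    proof (cases "k = 4")
      case True
      then show ?thesis using vv i an suc_ne[of n a] n3 by (auto simp: adjs' pl_def)
    next
      case False
      then have p: "pl k = k - 1" "4 \<le> k - 1" "k - 1 < m" using k by (auto simp: pl_def)
      show ?thesis using vv i an k suc_ne[of n a] n3 p adj4[OF m5 p(2) p(3)] by simp
    qed
    moreover have "((a+1) mod n, pl k) \<in> Delta_verts n m" using n3 k by (auto simp: vmem pl_def)
    ultimately have ex: "\<exists>u\<in>Delta_verts n m. snd u = pl k \<and> Delta_adj n m d u v" by force
    show "k \<le> snd v \<and> (\<exists>u\<in>Delta_verts n m. snd u = pl k \<and> Delta_adj n m d u v)"
      using i vv ex by simp
  next
    assume H: "k \<le> snd v \<and> (\<exists>u\<in>Delta_verts n m. snd u = pl k \<and> Delta_adj n m d u v)"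
    then obtain b where e: "Delta_adj n m d (b,pl k) (a,i)" using vv by (metis prod.collapse)
    show "snd v = k"
    proof (cases "k = 4")
      case True
      then show ?thesis using e H vv by (auto simp: adjs' pl_def)
    next
      case False
      then have p: "pl k = k - 1" "4 \<le> k - 1" "k - 1 < m" using k by (auto simp: pl_def)
      show ?thesis using e H vv k p adj4[OF m5 p(2) p(3)] by auto
    qed
  qed
qed

lemma layers:
  assumes f: "f \<in> graph_auts (Delta_verts n m) (Delta_adj n m d)"
  shows "\<forall>v\<in>Delta_verts n m. snd (f v) = k \<longleftrightarrow> snd v = k"
proof (induction k rule: less_induct)
  case (less k)
  show ?case
  proof
    fix v assume v: "v \<in> Delta_verts n m"
    have fv: "f v \<in> Delta_verts n m" using aut_in[OF f v] .
    consider "k = 0 \<or> k = 1 \<or> k = 3" | "k = 2" | "4 \<le> k" "k < m" | "m \<le> k" by arith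
    then show "snd (f v) = k \<longleftrightarrow> snd v = k"
    proof cases
      case 1
      then show ?thesis using layer_basic[OF f v] by auto
    next
      case 2
      have "(\<exists>u\<in>Delta_verts n m. snd u = 0 \<and> Delta_adj n m d u (f v)) \<longleftrightarrow>
            (\<exists>u\<in>Delta_verts n m. snd u = 0 \<and> Delta_adj n m d u v)"
        by (rule exQ_inv[OF f v]) (rule layer_basic(1)[OF f])
      then show ?thesis using char2[OF v] char2[OF fv] layer_basic[OF f v] 2 by simp
    next
      case 3
      have lt: "pl k < k" using 3 by (simp add: pl_def)
      have "(\<exists>u\<in>Delta_verts n m. snd u = pl k \<and> Delta_adj n m d u (f v)) \<longleftrightarrow>
            (\<exists>u\<in>Delta_verts n m. snd u = pl k \<and> Delta_adj n m d u v)"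
        by (rule exQ_inv[OF f v]) (use less[OF lt] in blast)
      moreover have "k \<le> snd (f v) \<longleftrightarrow> k \<le> snd v"
      proof -
        have "k \<le> snd x \<longleftrightarrow> (\<forall>j<k. snd x \<noteq> j)" for x :: "nat \<times> nat" using not_le by blast
        then show ?thesis using less v by auto
      qed
      ultimately show ?thesis using chark[OF v 3] chark[OF fv 3] by simp
    next
      case 4
      then show ?thesis using v fv by (auto simp: Delta_verts_def)
    qed
  qed
qed

lemma layer_pres:
  assumes f: "f \<in> graph_auts (Delta_verts n m) (Delta_adj n m d)" and v: "v \<in> Delta_verts n m"
  shows "snd (f v) = snd v"
  using layers[OF f, of "snd v"] v by auto

end

lemma mod_shift_inj: assumes "a < (n::nat)" "b < n" "(a+g) mod n = (b+g) mod n" shows "a = b"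
proof (rule ccontr)
  assume ne: "a \<noteq> b"
  have key: "x < y \<Longrightarrow> y < n \<Longrightarrow> (x+g) mod n \<noteq> (y+g) mod n" for x y
  proof -
    assume xy: "x < y" "y < n"
    have "(x+g+(y-x)) mod n \<noteq> (x+g) mod n" using add_mod_ne[of "y-x" n "x+g"] xy by simp
    moreover have "x+g+(y-x) = y+g" using xy by simp
    ultimately show ?thesis by metis
  qed
  show False using ne assms key[of a b] key[of b a] by (metis linorder_neqE_nat)
qed

lemma mod_shift_eq: assumes "a < (n::nat)" "b < n"
  shows "(b+g) mod n = ((a+g) mod n + k) mod n \<longleftrightarrow> b = (a+k) mod n"
proof -
  have "((a+g) mod n + k) mod n = ((a+k) mod n + g) mod n"
    by (metis add.commute add.left_commute mod_add_left_eq)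
  moreover have "(a+k) mod n < n" using assms by simp
  ultimately show ?thesis using mod_shift_inj[of b n "(a+k) mod n" g] assms by auto
qed

lemma mod_shift_ne: assumes "a < (n::nat)" "b < n"
  shows "(a+g) mod n = (b+g) mod n \<longleftrightarrow> a = b"
  using mod_shift_inj assms by auto

lemma rt_adj: assumes ab: "a < n" "b < n"
  shows "Delta_adj n m d ((a+g) mod n, i) ((b+g) mod n, j) \<longleftrightarrow> Delta_adj n m d (a,i) (b,j)"
proof -
  have n0: "0 < n" using assms by simp
  have E1: "(a+g) mod n = (b+g) mod n \<longleftrightarrow> a = b" "(b+g) mod n = (a+g) mod n \<longleftrightarrow> b = a"
    using mod_shift_ne[of a n b g] ab by auto
  have E2: "(b+g) mod n = ((a+g) mod n + 1) mod n \<longleftrightarrow> b = (a+1) mod n"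
           "(a+g) mod n = ((b+g) mod n + 1) mod n \<longleftrightarrow> a = (b+1) mod n"
           "(b+g) mod n = ((a+g) mod n + d) mod n \<longleftrightarrow> b = (a+d) mod n"
           "(a+g) mod n = ((b+g) mod n + d) mod n \<longleftrightarrow> a = (b+d) mod n"
    by (rule mod_shift_eq[OF ab], rule mod_shift_eq[OF ab(2,1)], rule mod_shift_eq[OF ab], rule mod_shift_eq[OF ab(2,1)])
  have E4: "(a+g) mod n < n" "(b+g) mod n < n" using n0 by auto
  show ?thesis
    unfolding Delta_adj_def rel_iff E1 E2 using E4 ab by simp
qed

lemma rt_aut: assumes g: "g < n"
  shows "right_transl n m g \<in> graph_auts (Delta_verts n m) (Delta_adj n m d)"
proof -
  let ?V = "Delta_verts n m" and ?f = "right_transl n m g"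
  have fv: "?f (a,i) = ((a+g) mod n, i)" if "(a,i) \<in> ?V" for a i
    using that by (simp add: right_transl_def)
  have sub: "?f ` ?V \<subseteq> ?V"
    using g by (auto simp: right_transl_def Delta_verts_def)
  have inj: "inj_on ?f ?V"
  proof (rule inj_onI)
    fix x y assume x: "x \<in> ?V" and y: "y \<in> ?V" and e: "?f x = ?f y"
    obtain a i where xx: "x = (a,i)" by (cases x)
    obtain b j where yy: "y = (b,j)" by (cases y)
    have "a < n" "b < n" using x y xx yy by (auto simp: Delta_verts_def)
    then show "x = y" using e fv x y xx yy mod_shift_inj[of a n b g] by auto
  qed
  have fin: "finite ?V" by (simp add: Delta_verts_def)
  have img: "?f ` ?V = ?V" using endo_inj_surj[OF fin sub inj] .
  have bij: "bij_betw ?f ?V ?V" using inj img by (simp add: bij_betw_def)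
  have ext: "?f \<in> extensional ?V" by (simp add: right_transl_def)
  have adj: "Delta_adj n m d (?f u) (?f v) \<longleftrightarrow> Delta_adj n m d u v" if "u \<in> ?V" "v \<in> ?V" for u v
  proof -
    obtain a i where uu: "u = (a,i)" by (cases u)
    obtain b j where vv: "v = (b,j)" by (cases v)
    have "a < n" "b < n" using that uu vv by (auto simp: Delta_verts_def)
    then show ?thesis using fv that uu vv rt_adj by auto
  qed
  show ?thesis unfolding graph_auts_def Bij_def using bij ext adj by auto
qed

context fixes n m d :: nat assumes n3: "3 \<le> n" and m5: "5 \<le> m" and dn: "d + 1 < n"
begin

lemmas adjs'' = adj0[OF m5, unfolded One_nat_def] adj1[OF m5, unfolded One_nat_def] adj2[OF m5, unfolded One_nat_def] adj3[OF m5, unfolded One_nat_def] adj4[OF m5, unfolded One_nat_def]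

lemma aut_transl:
  assumes f: "f \<in> graph_auts (Delta_verts n m) (Delta_adj n m d)"
  shows "\<exists>g<n. f = right_transl n m g"
proof -
  let ?V = "Delta_verts n m"
  define s where "s i a = fst (f (a,i))" for i a
  have fs: "f (a,i) = (s i a, i)" if "a < n" "i < m" for a i
  proof -
    have "(a,i) \<in> ?V" using that by (simp add: vmem)
    then have "snd (f (a,i)) = i" using layer_pres[OF n3 m5 dn f] by auto
    then show ?thesis unfolding s_def by (metis prod.collapse)
  qed
  have sn: "s i a < n" if "a < n" "i < m" for a i
  proof -
    have "(a,i) \<in> ?V" using that by (simp add: vmem)
    then have "f (a,i) \<in> ?V" using aut_in[OF f] by blast
    then show ?thesis using fs[OF that] by (simp add: vmem)
  qed
  have sadj: "Delta_adj n m d (s i a, i) (s j b, j) \<longleftrightarrow> Delta_adj n m d (a,i) (b,j)"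
    if "a < n" "i < m" "b < n" "j < m" for a i b j
    using aut_adj[OF f, of "(a,i)" "(b,j)"] that fs by (simp add: vmem)
  have anti: "s i a = s j a" if "a < n" "i < m" "j < m"
     "\<And>x y. x < n \<Longrightarrow> y < n \<Longrightarrow> Delta_adj n m d (x,i) (y,j) \<longleftrightarrow> x \<noteq> y" for i j a
    using sadj[of a i a j] that sn by auto
  have s02: "s 0 a = s 2 a" if "a < n" for a
    by (rule anti) (use that m5 in \<open>auto simp: adjs''\<close>)
  have s3: "s 3 a = s (m-1) a" if "a < n" for a
    by (rule anti) (use that m5 in \<open>auto simp: adjs''\<close>)
  have s14: "s 1 a = s 4 a" if "a < n" for a
    by (rule anti) (use that m5 in \<open>auto simp: adjs''\<close>)
  have sl: "s l a = s (l+1) a" if "a < n" "4 \<le> l" "l + 1 < m" for a l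
    by (rule anti) (use that m5 adj4[OF m5 that(2)] in \<open>auto\<close>)
  have s23: "s 2 a = s 3 a" if "a < n" for a
    using sadj[of a 2 a 3] that sn m5 by (auto simp: adjs'')
  have skt: "4 + t < m \<Longrightarrow> s (4 + t) a = s 1 a" if "a < n" for a t
  proof (induction t)
    case 0 then show ?case using s14[OF that] by simp
  next
    case (Suc t)
    then have "s (4 + t) a = s 1 a" by simp
    moreover have "s (4 + t) a = s (4 + t + 1) a" using sl[OF that, of "4+t"] Suc by simp
    ultimately show ?case by simp
  qed
  have sk: "s k a = s 1 a" if "a < n" "4 \<le> k" "k < m" for a k
    using skt[OF that(1), of "k - 4"] that by simp
  have sall: "s i a = s 1 a" if "a < n" "i < m" for a i
  proof -
    consider "i = 0" | "i = 1" | "i = 2" | "i = 3" | "4 \<le> i" by arith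
    then show ?thesis
    proof cases
      case 1 then show ?thesis using s02 s23 s3 sk[of a "m-1"] that m5 by simp
    next
      case 3 then show ?thesis using s23 s3 sk[of a "m-1"] that m5 by simp
    next
      case 4 then show ?thesis using s3 sk[of a "m-1"] that m5 by simp
    qed (use sk that in auto)
  qed
  have ssuc: "s 1 ((a+1) mod n) = (s 1 a + 1) mod n" if "a < n" for a
  proof -
    have "Delta_adj n m d (a,0) ((a+1) mod n, 1)" using that by (auto simp: adjs'')
    then have "Delta_adj n m d (s 0 a, 0) (s 1 ((a+1) mod n), 1)"
      using sadj[of a 0 "(a+1) mod n" 1] that m5 by simp
    then show ?thesis using sall[of a 0] that m5 by (auto simp: adjs'')
  qed
  have sform: "s 1 a = (s 1 0 + a) mod n" if "a < n" for a
    using that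
  proof (induction a)
    case 0 then show ?case using sn[of 0 1] m5 by simp
  next
    case (Suc a)
    then have "s 1 (Suc a) = s 1 ((a+1) mod n)" by simp
    also have "\<dots> = (s 1 a + 1) mod n" by (rule ssuc) (use Suc.prems in simp)
    also have "\<dots> = ((s 1 0 + a) mod n + 1) mod n" using Suc by simp
    also have "\<dots> = (s 1 0 + Suc a) mod n" by (simp add: mod_Suc_eq)
    finally show ?case .
  qed
  have "f = right_transl n m (s 1 0)"
  proof
    fix x
    show "f x = right_transl n m (s 1 0) x"
    proof (cases "x \<in> ?V")
      case True
      obtain a i where xx: "x = (a,i)" by (cases x)
      have ai: "a < n" "i < m" using True xx by (auto simp: vmem)
      show ?thesis using fs[OF ai] sall[OF ai] sform[OF ai(1)] True xx
        by (simp add: right_transl_def add.commute)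
    next
      case False
      then show ?thesis using extensional_arb[OF aut_ext[OF f] False] by (simp add: right_transl_def)
    qed
  qed
  moreover have "s 1 0 < n" using sn[of 0 1] m5 n3 by simp
  ultimately show ?thesis by blast
qed

lemma auts_eq: "graph_auts (Delta_verts n m) (Delta_adj n m d) = right_transl n m ` {0..<n}"
  using aut_transl rt_aut by fastforce

end

locale gtrans =
  fixes V :: "'v set" and E :: "'v \<Rightarrow> 'v \<Rightarrow> bool" and V' :: "'w set" and E' :: "'w \<Rightarrow> 'w \<Rightarrow> bool"
    and \<psi> :: "'v \<Rightarrow> 'w"
  assumes bij: "bij_betw \<psi> V V'"
    and Eq: "\<And>p q. p \<in> V \<Longrightarrow> q \<in> V \<Longrightarrow> E' (\<psi> p) (\<psi> q) \<longleftrightarrow> E p q"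
    and dom': "\<And>u v. E' u v \<Longrightarrow> u \<in> V' \<and> v \<in> V'"
    and dom: "\<And>u v. E u v \<Longrightarrow> u \<in> V \<and> v \<in> V"
begin

definition "\<psi>' = inv_into V \<psi>"

lemma psi_in: "p \<in> V \<Longrightarrow> \<psi> p \<in> V'" using bij bij_betwE by blast
lemma psi'_in2: "v \<in> V' \<Longrightarrow> \<psi>' v \<in> V"
  unfolding \<psi>'_def using bij by (meson bij_betwE bij_betw_inv_into)
lemma psi_psi': "v \<in> V' \<Longrightarrow> \<psi> (\<psi>' v) = v"
  unfolding \<psi>'_def using bij by (meson bij_betw_inv_into_right)
lemma psi'_psi: "p \<in> V \<Longrightarrow> \<psi>' (\<psi> p) = p"
  unfolding \<psi>'_def using bij by (meson bij_betw_inv_into_left)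
lemma psi_inj: "p \<in> V \<Longrightarrow> q \<in> V \<Longrightarrow> \<psi> p = \<psi> q \<longleftrightarrow> p = q"
  using psi'_psi by metis
lemma Eq': "u \<in> V' \<Longrightarrow> v \<in> V' \<Longrightarrow> E' u v \<longleftrightarrow> E (\<psi>' u) (\<psi>' v)"
  using Eq[of "\<psi>' u" "\<psi>' v"] psi'_in2 psi_psi' by simp

lemma simple: "simple_graph V E \<Longrightarrow> simple_graph V' E'"
  unfolding simple_graph_def
proof (intro conjI allI impI)
  assume S: "finite V \<and> (\<forall>u v. E u v \<longrightarrow> u \<in> V \<and> v \<in> V) \<and> (\<forall>u v. E u v \<longrightarrow> E v u) \<and> (\<forall>v. \<not> E v v)"
  show "finite V'" using S bij bij_betw_finite by blast
  fix u v
  show "E' u v \<Longrightarrow> u \<in> V'" "E' u v \<Longrightarrow> v \<in> V'" using dom' by auto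
  show "E' u v \<Longrightarrow> E' v u" using dom' Eq' S by metis
next
  fix v
  assume S: "finite V \<and> (\<forall>u v. E u v \<longrightarrow> u \<in> V \<and> v \<in> V) \<and> (\<forall>u v. E u v \<longrightarrow> E v u) \<and> (\<forall>v. \<not> E v v)"
  show "\<not> E' v v" using dom' Eq' S by metis
qed

lemma nbhd: "v \<in> V' \<Longrightarrow> {u \<in> V'. E' v u} = \<psi> ` {p \<in> V. E (\<psi>' v) p}"
proof
  assume v: "v \<in> V'"
  show "{u \<in> V'. E' v u} \<subseteq> \<psi> ` {p \<in> V. E (\<psi>' v) p}"
  proof
    fix u assume "u \<in> {u \<in> V'. E' v u}"
    then have u: "u \<in> V'" "E' v u" by auto
    then have "E (\<psi>' v) (\<psi>' u)" using Eq' v by auto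
    moreover have "u = \<psi> (\<psi>' u)" using psi_psi' u by simp
    ultimately show "u \<in> \<psi> ` {p \<in> V. E (\<psi>' v) p}" using psi'_in2 u by blast
  qed
  show "\<psi> ` {p \<in> V. E (\<psi>' v) p} \<subseteq> {u \<in> V'. E' v u}"
  proof
    fix u assume "u \<in> \<psi> ` {p \<in> V. E (\<psi>' v) p}"
    then obtain p where p: "p \<in> V" "E (\<psi>' v) p" "u = \<psi> p" by auto
    then have "E' v u" using Eq' v psi_in psi'_psi by auto
    then show "u \<in> {u \<in> V'. E' v u}" using p psi_in by auto
  qed
qed

lemma degree: "v \<in> V' \<Longrightarrow> card {u \<in> V'. E' v u} = card {p \<in> V. E (\<psi>' v) p}"
proof -
  assume v: "v \<in> V'"
  have "inj_on \<psi> {p \<in> V. E (\<psi>' v) p}"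
    by (rule inj_on_subset[OF bij_betw_imp_inj_on[OF bij]]) auto
  then show ?thesis unfolding nbhd[OF v] by (rule card_image)
qed

lemma regular: "regular_graph V E \<Longrightarrow> regular_graph V' E'"
  unfolding regular_graph_def using degree psi'_in2 by metis

definition conj :: "('v \<Rightarrow> 'v) \<Rightarrow> 'w \<Rightarrow> 'w" where
  "conj f = (\<lambda>v\<in>V'. \<psi> (f (\<psi>' v)))"

lemma conj_aut: assumes f: "f \<in> graph_auts V E" shows "conj f \<in> graph_auts V' E'"
proof -
  have bf: "bij_betw f V V" using aut_bij[OF f] .
  have b': "bij_betw \<psi>' V' V" unfolding \<psi>'_def using bij bij_betw_inv_into by blast
  have "bij_betw (\<psi> \<circ> (f \<circ> \<psi>')) V' V'" by (rule bij_betw_trans[OF bij_betw_trans[OF b' bf] bij])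
  then have "bij_betw (conj f) V' V'" unfolding conj_def
    by (rule bij_betw_cong[THEN iffD1, rotated]) auto
  moreover have "conj f \<in> extensional V'" by (simp add: conj_def)
  moreover have "E' (conj f u) (conj f v) \<longleftrightarrow> E' u v" if "u \<in> V'" "v \<in> V'" for u v
  proof -
    have "E' (conj f u) (conj f v) \<longleftrightarrow> E (f (\<psi>' u)) (f (\<psi>' v))"
      using that Eq aut_in[OF f] psi'_in2 by (simp add: conj_def)
    also have "\<dots> \<longleftrightarrow> E (\<psi>' u) (\<psi>' v)" using aut_adj[OF f] psi'_in2 that by blast
    also have "\<dots> \<longleftrightarrow> E' u v" using Eq' that by simp
    finally show ?thesis .
  qed
  ultimately show ?thesis unfolding graph_auts_def Bij_def by auto
qed

lemma aut_conj: assumes f': "f' \<in> graph_auts V' E'" shows "\<exists>f\<in>graph_auts V E. f' = conj f"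
proof -
  define f where "f = (\<lambda>p\<in>V. \<psi>' (f' (\<psi> p)))"
  have bf: "bij_betw f' V' V'" using aut_bij[OF f'] .
  have b': "bij_betw \<psi>' V' V" unfolding \<psi>'_def using bij bij_betw_inv_into by blast
  have "bij_betw (\<psi>' \<circ> (f' \<circ> \<psi>)) V V" by (rule bij_betw_trans[OF bij_betw_trans[OF bij bf] b'])
  then have "bij_betw f V V" unfolding f_def
    by (rule bij_betw_cong[THEN iffD1, rotated]) auto
  moreover have "f \<in> extensional V" by (simp add: f_def)
  moreover have "E (f u) (f v) \<longleftrightarrow> E u v" if "u \<in> V" "v \<in> V" for u v
  proof -
    have "E (f u) (f v) \<longleftrightarrow> E' (f' (\<psi> u)) (f' (\<psi> v))"
      using that Eq' aut_in[OF f'] psi_in by (simp add: f_def)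
    also have "\<dots> \<longleftrightarrow> E' (\<psi> u) (\<psi> v)" using aut_adj[OF f'] psi_in that by blast
    also have "\<dots> \<longleftrightarrow> E u v" using Eq that by simp
    finally show ?thesis .
  qed
  ultimately have fa: "f \<in> graph_auts V E" unfolding graph_auts_def Bij_def by auto
  have "f' = conj f"
  proof
    fix v
    show "f' v = conj f v"
    proof (cases "v \<in> V'")
      case True
      then show ?thesis using psi'_in2 psi_psi' aut_in[OF f'] by (simp add: conj_def f_def)
    next
      case False
      then show ?thesis using extensional_arb[OF aut_ext[OF f'] False] by (simp add: conj_def)
    qed
  qed
  then show ?thesis using fa by blast
qed

lemma auts_conj: "graph_auts V' E' = conj ` graph_auts V E"
  using conj_aut aut_conj by blast

lemma conj_app: "p \<in> V \<Longrightarrow> conj f (\<psi> p) = \<psi> (f p)"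
  unfolding conj_def using psi_in psi'_psi by simp

end

lemma auts_subgroup: "subgroup (graph_auts V E) (BijGroup V)"
proof (rule group.subgroupI[OF group_BijGroup])
  show "graph_auts V E \<subseteq> carrier (BijGroup V)" by (auto simp: graph_auts_def BijGroup_def)
  show "graph_auts V E \<noteq> {}"
  proof -
    have "(\<lambda>x\<in>V. x) \<in> graph_auts V E" by (simp add: graph_auts_def id_Bij)
    then show ?thesis by blast
  qed
next
  fix f assume f: "f \<in> graph_auts V E"
  have fB: "f \<in> Bij V" using f by (simp add: graph_auts_def)
  have inv: "inv\<^bsub>BijGroup V\<^esub> f = (\<lambda>x\<in>V. inv_into V f x)" using inv_BijGroup[OF fB] .
  have iB: "(\<lambda>x\<in>V. inv_into V f x) \<in> Bij V" using restrict_inv_into_Bij[OF fB] .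
  have "E (inv_into V f u) (inv_into V f v) \<longleftrightarrow> E u v" if "u \<in> V" "v \<in> V" for u v
  proof -
    have bf: "bij_betw f V V" using aut_bij[OF f] .
    have "inv_into V f u \<in> V" "inv_into V f v \<in> V" using that bf by (meson bij_betwE bij_betw_inv_into)+
    moreover have "f (inv_into V f u) = u" "f (inv_into V f v) = v" using that bf by (meson bij_betw_inv_into_right)+
    ultimately show ?thesis using aut_adj[OF f] by metis
  qed
  then show "inv\<^bsub>BijGroup V\<^esub> f \<in> graph_auts V E" using iB inv by (simp add: graph_auts_def)
next
  fix f g assume f: "f \<in> graph_auts V E" and g: "g \<in> graph_auts V E"
  have fB: "f \<in> Bij V" and gB: "g \<in> Bij V" using f g by (auto simp: graph_auts_def)
  have "f \<otimes>\<^bsub>BijGroup V\<^esub> g = compose V f g" using fB gB by (simp add: BijGroup_def)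
  moreover have "compose V f g \<in> Bij V" using compose_Bij[OF fB gB] .
  moreover have "E (compose V f g u) (compose V f g v) \<longleftrightarrow> E u v" if "u \<in> V" "v \<in> V" for u v
    using that aut_adj[OF f] aut_adj[OF g] aut_in[OF g] by (simp add: compose_def)
  ultimately show "f \<otimes>\<^bsub>BijGroup V\<^esub> g \<in> graph_auts V E" by (simp add: graph_auts_def)
qed

lemma group_Aut: "group (Aut_group V E)"
  unfolding Aut_group_def using subgroup.subgroup_is_group[OF auts_subgroup group_BijGroup] .

lemma carrier_Aut: "carrier (Aut_group V E) = graph_auts V E"
  by (simp add: Aut_group_def)

lemma mult_Aut: "f \<in> graph_auts V E \<Longrightarrow> g \<in> graph_auts V E \<Longrightarrow> f \<otimes>\<^bsub>Aut_group V E\<^esub> g = compose V f g"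
  by (auto simp: Aut_group_def BijGroup_def graph_auts_def)

lemma simple_Delta: "2 \<le> n \<Longrightarrow> simple_graph (Delta_verts n m) (Delta_adj n m d)"
  unfolding simple_graph_def
proof (intro conjI allI impI)
  assume "2 \<le> n"
  show "finite (Delta_verts n m)" by (simp add: Delta_verts_def)
  fix u v assume e: "Delta_adj n m d u v"
  obtain a i where uu: "u = (a,i)" by (cases u)
  obtain b j where vv: "v = (b,j)" by (cases v)
  show "u \<in> Delta_verts n m" "v \<in> Delta_verts n m" using adj_V[of n m d a i b j] e uu vv by (auto simp: vmem)
  show "Delta_adj n m d v u" using e adj_sym by metis
next
  fix v :: "nat \<times> nat"
  assume "2 \<le> n"
  obtain a i where vv: "v = (a,i)" by (cases v)
  show "\<not> Delta_adj n m d v v"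
  proof
    assume e: "Delta_adj n m d v v"
    then have "a < n" using adj_V vv by blast
    then show False using e vv suc_ne[of n a] \<open>2 \<le> n\<close> by (auto simp: Delta_adj_def rel_iff)
  qed
qed

lemma card_layer: "card (A \<times> {j::nat}) = card A"
  by (simp add: card_cartesian_product)

context fixes n m :: nat assumes n3: "3 \<le> n" and m5: "5 \<le> m"
begin

lemmas adjz = adj0[OF m5, unfolded One_nat_def] adj1[OF m5, unfolded One_nat_def] adj2[OF m5, unfolded One_nat_def] adj3[OF m5, unfolded One_nat_def] adj4[OF m5, unfolded One_nat_def]

lemma cdiff: "a < n \<Longrightarrow> card (({0..<n} - {a}) \<times> {j::nat}) = n - 1"
  by (simp add: card_layer)

lemma deg: assumes v: "(a,i) \<in> Delta_verts n m"
  shows "card {u \<in> Delta_verts n m. Delta_adj n m 0 (a,i) u} = 2 * n"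
proof -
  have an: "a < n" "i < m" using v by (auto simp: vmem)
  have pi: "\<And>x y. x < n \<Longrightarrow> y < n \<Longrightarrow> x = (y+1) mod n \<longleftrightarrow> y = (x+n-1) mod n"
    using pred_iff by blast
  consider "i = 0" | "i = 1" | "i = 2" | "i = 3" | "4 \<le> i" by arith
  then show ?thesis
  proof cases
    case 1
    have "{u \<in> Delta_verts n m. Delta_adj n m 0 (a,i) u} =
      ({((a+1) mod n, 1)} \<union> (({0..<n}-{a}) \<times> {2})) \<union> ({0..<n} \<times> {3})"
      using 1 an m5 n3 by (auto simp: adjz vmem)
    moreover have "card (({((a+1) mod n, 1)} \<union> (({0..<n}-{a}) \<times> {2})) \<union> ({0..<n} \<times> {3}) :: (nat \<times> nat) set) = 2 * n"
      using an n3 by (subst card_Un_disjoint, auto simp: card_Un_disjoint card_layer)+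
    ultimately show ?thesis by simp
  next
    case 2
    have "{u \<in> Delta_verts n m. Delta_adj n m 0 (a,i) u} =
      (({((a+n-1) mod n, 0)} \<union> (({0..<n}-{a}) \<times> {1})) \<union> {(a, 2)}) \<union> (({0..<n}-{a}) \<times> {4})"
      using 2 an m5 n3 pi[of a] by (auto simp: adjz vmem)
    moreover have "card ((({((a+n-1) mod n, 0)} \<union> (({0..<n}-{a}) \<times> {1})) \<union> {(a, 2)}) \<union> (({0..<n}-{a}) \<times> {4}) :: (nat \<times> nat) set) = 2 * n"
      using an n3 by (subst card_Un_disjoint, auto simp: card_Un_disjoint card_layer)+
    ultimately show ?thesis by simp
  next
    case 3
    have "{u \<in> Delta_verts n m. Delta_adj n m 0 (a,i) u} =
      (((({0..<n}-{a}) \<times> {0}) \<union> {(a, 1)}) \<union> (({0..<n}-{a}) \<times> {2})) \<union> {(a,3)}"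
      using 3 an m5 n3 by (auto simp: adjz vmem)
    moreover have "card ((((({0..<n}-{a}) \<times> {0}) \<union> {(a, 1)}) \<union> (({0..<n}-{a}) \<times> {2})) \<union> {(a,3)} :: (nat \<times> nat) set) = 2 * n"
      using an n3 by (subst card_Un_disjoint, auto simp: card_Un_disjoint card_layer)+
    ultimately show ?thesis by simp
  next
    case 4
    have "{u \<in> Delta_verts n m. Delta_adj n m 0 (a,i) u} =
      (({0..<n} \<times> {0}) \<union> {(a,2)}) \<union> (({0..<n}-{a}) \<times> {m-1})"
      using 4 an m5 n3 by (auto simp: adjz vmem)
    moreover have "card ((({0..<n} \<times> {0}) \<union> {(a,2)}) \<union> (({0..<n}-{a}) \<times> {m-1}) :: (nat \<times> nat) set) = 2 * n"
      using an n3 m5 by (subst card_Un_disjoint, auto simp: card_Un_disjoint card_layer)+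
    ultimately show ?thesis by simp
  next
    case 5
    define up where "up = (if i = m - 1 then 3 else i + 1)"
    define lo where "lo = (if i = 4 then 1 else i - 1)"
    have "{u \<in> Delta_verts n m. Delta_adj n m 0 (a,i) u} =
      ({((a+1) mod n, i), ((a+n-1) mod n, i)} \<union> (({0..<n}-{a}) \<times> {lo})) \<union> (({0..<n}-{a}) \<times> {up})"
      using 5 an m5 n3 pi[of a] by (auto simp: adjz vmem up_def lo_def)
    moreover have "card (({((a+1) mod n, i), ((a+n-1) mod n, i)} \<union> (({0..<n}-{a}) \<times> {lo})) \<union> (({0..<n}-{a}) \<times> {up}) :: (nat \<times> nat) set) = 2 * n"
    proof -
      have ne: "lo \<noteq> i" "up \<noteq> i" "up \<noteq> lo" using 5 an m5 unfolding up_def lo_def by auto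
      have c1: "card {((a+1) mod n, i), ((a+n-1) mod n, i)} = 2" using suc_ne_pred[of n a] n3 an by simp
      have c2: "card (({0..<n}-{a}) \<times> {lo}) = n - 1" "card (({0..<n}-{a}) \<times> {up}) = n - 1"
        using an by (simp_all add: card_layer)
      have "card ({((a+1) mod n, i), ((a+n-1) mod n, i)} \<union> (({0..<n}-{a}) \<times> {lo})) = 2 + (n - 1)"
        using c1 c2 ne by (subst card_Un_disjoint) auto
      moreover have "card (({((a+1) mod n, i), ((a+n-1) mod n, i)} \<union> (({0..<n}-{a}) \<times> {lo})) \<union> (({0..<n}-{a}) \<times> {up}))
          = card ({((a+1) mod n, i), ((a+n-1) mod n, i)} \<union> (({0..<n}-{a}) \<times> {lo})) + (n - 1)"
        using c2 ne by (subst card_Un_disjoint) auto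
      ultimately show ?thesis using n3 by simp
    qed
    ultimately show ?thesis by simp
  qed
qed

lemma regular_Delta: "regular_graph (Delta_verts n m) (Delta_adj n m 0)"
  unfolding regular_graph_def using deg by (metis prod.collapse)

end

lemma (in group) pow_mod_ord:
  assumes x: "x \<in> carrier G" and xN: "x [^] (N::nat) = \<one>"
  shows "x [^] (k mod N) = x [^] k"
proof -
  have "x [^] k = x [^] (N * (k div N) + k mod N)" by simp
  also have "\<dots> = x [^] (N * (k div N)) \<otimes> x [^] (k mod N)" using nat_pow_mult[OF x] by simp
  also have "x [^] (N * (k div N)) = \<one>" using nat_pow_pow[OF x, symmetric] xN by simp
  finally show ?thesis using x by simp
qed

lemma cyc_gen:
  assumes grp: "group G" and cyc: "cyclic_group G" and fin: "finite (carrier G)"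
  shows "\<exists>x\<in>carrier G. bij_betw (\<lambda>k::nat. x [^]\<^bsub>G\<^esub> k) {0..<card (carrier G)} (carrier G)
            \<and> x [^]\<^bsub>G\<^esub> card (carrier G) = \<one>\<^bsub>G\<^esub>"
proof -
  interpret G: group G by (rule grp)
  obtain x where x: "x \<in> carrier G" "subgroup_generated G {x} = G"
    using cyc unfolding cyclic_group_def by blast
  have gen: "generate G {x} = carrier G"
    using arg_cong[OF x(2), of carrier] x(1) by (simp add: carrier_subgroup_generated)
  let ?N = "card (carrier G)"
  have ordx: "G.ord x = ?N" using G.generate_pow_card[OF x(1)] gen by simp
  have N0: "?N \<noteq> 0" using fin G.one_closed by (metis card_0_eq empty_iff)
  have xN: "x [^]\<^bsub>G\<^esub> ?N = \<one>\<^bsub>G\<^esub>" using G.pow_ord_eq_1[OF x(1)] ordx by simp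
  have allp: "carrier G = {x [^]\<^bsub>G\<^esub> k | k. k \<in> (UNIV :: nat set)}"
    using G.generate_pow_nat[OF x(1)] ordx N0 gen by simp
  have img: "(\<lambda>k::nat. x [^]\<^bsub>G\<^esub> k) ` {0..<?N} = carrier G"
  proof
    show "(\<lambda>k::nat. x [^]\<^bsub>G\<^esub> k) ` {0..<?N} \<subseteq> carrier G" using x(1) by auto
    show "carrier G \<subseteq> (\<lambda>k::nat. x [^]\<^bsub>G\<^esub> k) ` {0..<?N}"
    proof
      fix g assume "g \<in> carrier G"
      then obtain k :: nat where g: "g = x [^]\<^bsub>G\<^esub> k" using allp by blast
      have "g = x [^]\<^bsub>G\<^esub> (k mod ?N)" using G.pow_mod_ord[OF x(1) xN] g by simp
      moreover have "k mod ?N \<in> {0..<?N}" using N0 by simp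
      ultimately show "g \<in> (\<lambda>k::nat. x [^]\<^bsub>G\<^esub> k) ` {0..<?N}" by blast
    qed
  qed
  have "inj_on (\<lambda>k::nat. x [^]\<^bsub>G\<^esub> k) {0..<?N}"
    by (rule eq_card_imp_inj_on) (use img in simp_all)
  then show ?thesis using img xN x(1) by (auto simp: bij_betw_def)
qed

lemma part2:
  fixes G :: "('a, 'b) monoid_scheme" and m' :: nat
  assumes grp: "group G" and cyc: "cyclic_group G" and fin: "finite (carrier G)"
    and c3: "card (carrier G) \<ge> 3" and m5: "m' \<ge> 5"
  shows "\<exists>(V :: ('a \<times> nat) set) E. is_mGRR m' G V E"
proof -
  interpret G: comm_group G using group.cyclic_imp_abelian_group[OF grp cyc] .
  let ?N = "card (carrier G)"
  obtain x where x: "x \<in> carrier G" and xb: "bij_betw (\<lambda>k::nat. x [^]\<^bsub>G\<^esub> k) {0..<?N} (carrier G)"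
     and xN: "x [^]\<^bsub>G\<^esub> ?N = \<one>\<^bsub>G\<^esub>"
    using cyc_gen[OF grp cyc fin] by blast
  define V where "V = Delta_verts ?N m'"
  define A where "A = Delta_adj ?N m' 0"
  define V' where "V' = carrier G \<times> {0..<m'}"
  define \<psi> where "\<psi> = (\<lambda>(a::nat, i::nat). (x [^]\<^bsub>G\<^esub> a, i))"
  define E' where "E' = (\<lambda>u v. \<exists>p\<in>V. \<exists>q\<in>V. u = \<psi> p \<and> v = \<psi> q \<and> A p q)"
  have psi_inj: "inj_on \<psi> V"
  proof (rule inj_onI)
    fix p q assume p: "p \<in> V" and q: "q \<in> V" and e: "\<psi> p = \<psi> q"
    obtain a i where pp: "p = (a,i)" by (cases p)
    obtain b j where qq: "q = (b,j)" by (cases q)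
    have "a \<in> {0..<?N}" "b \<in> {0..<?N}" using p q pp qq by (auto simp: V_def vmem)
    then show "p = q" using e pp qq xb unfolding \<psi>_def bij_betw_def inj_on_def by auto
  qed
  have psi_img: "\<psi> ` V = V'"
  proof
    show "\<psi> ` V \<subseteq> V'" using x by (auto simp: \<psi>_def V_def V'_def Delta_verts_def)
    show "V' \<subseteq> \<psi> ` V"
    proof
      fix v assume "v \<in> V'"
      then obtain g i where v: "v = (g,i)" "g \<in> carrier G" "i < m'" by (auto simp: V'_def)
      then have "g \<in> (\<lambda>k::nat. x [^]\<^bsub>G\<^esub> k) ` {0..<?N}" using xb by (simp add: bij_betw_def)
      then obtain a where a: "a < ?N" "g = x [^]\<^bsub>G\<^esub> a" by auto
      then have "(a,i) \<in> V" using v by (simp add: V_def vmem)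
      moreover have "v = \<psi> (a,i)" using v a by (simp add: \<psi>_def)
      ultimately show "v \<in> \<psi> ` V" by blast
    qed
  qed
  have psi_bij: "bij_betw \<psi> V V'" using psi_inj psi_img by (simp add: bij_betw_def)
  have N3: "3 \<le> ?N" using c3 .
  have N2: "2 \<le> ?N" using c3 by simp
  interpret T: gtrans V A V' E' \<psi>
  proof
    show "bij_betw \<psi> V V'" by (rule psi_bij)
    show "E' (\<psi> p) (\<psi> q) \<longleftrightarrow> A p q" if "p \<in> V" "q \<in> V" for p q
      using that psi_inj unfolding E'_def inj_on_def by blast
    show "u \<in> V' \<and> v \<in> V'" if "E' u v" for u v
      using that psi_img unfolding E'_def by blast
    show "u \<in> V \<and> v \<in> V" if "A u v" for u v
      using that simple_Delta[of ?N m' 0, OF N2] unfolding A_def V_def simple_graph_def by blast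
  qed
  have simple': "simple_graph V' E'"
    using T.simple simple_Delta[of ?N m' 0, OF N2] unfolding A_def V_def by blast
  have regular': "regular_graph V' E'"
    using T.regular regular_Delta[of ?N m'] N3 m5 unfolding A_def V_def by auto
  define \<rho> where "\<rho> g = (\<lambda>v\<in>V'. (fst v \<otimes>\<^bsub>G\<^esub> g, snd v))" for g
  have auts: "graph_auts V A = right_transl ?N m' ` {0..<?N}"
    using auts_eq[of ?N m' 0] N3 m5 unfolding V_def A_def by simp
  have conj_rt: "T.conj (right_transl ?N m' k) = \<rho> (x [^]\<^bsub>G\<^esub> k)" if k: "k < ?N" for k
  proof
    fix v
    show "T.conj (right_transl ?N m' k) v = \<rho> (x [^]\<^bsub>G\<^esub> k) v"
    proof (cases "v \<in> V'")
      case True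
      then obtain p where p: "p \<in> V" "v = \<psi> p" using psi_img by blast
      obtain a i where pp: "p = (a,i)" by (cases p)
      have ai: "a < ?N" "i < m'" using p pp by (auto simp: V_def vmem)
      have "T.conj (right_transl ?N m' k) v = \<psi> (right_transl ?N m' k p)"
        using T.conj_app p by simp
      also have "\<dots> = (x [^]\<^bsub>G\<^esub> ((a + k) mod ?N), i)"
        using p pp by (simp add: right_transl_def \<psi>_def V_def)
      also have "\<dots> = (x [^]\<^bsub>G\<^esub> a \<otimes>\<^bsub>G\<^esub> x [^]\<^bsub>G\<^esub> k, i)"
        using G.pow_mod_ord[OF x xN] G.nat_pow_mult[OF x] by simp
      also have "\<dots> = \<rho> (x [^]\<^bsub>G\<^esub> k) v"
        using True p pp by (simp add: \<rho>_def \<psi>_def)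
      finally show ?thesis .
    next
      case False
      then show ?thesis by (simp add: T.conj_def \<rho>_def)
    qed
  qed
  have autsG: "graph_auts V' E' = \<rho> ` carrier G"
  proof -
    have "graph_auts V' E' = T.conj ` right_transl ?N m' ` {0..<?N}" using T.auts_conj auts by simp
    also have "\<dots> = (\<lambda>k. \<rho> (x [^]\<^bsub>G\<^esub> k)) ` {0..<?N}" using conj_rt by (auto simp: image_image)
    also have "\<dots> = \<rho> ` ((\<lambda>k::nat. x [^]\<^bsub>G\<^esub> k) ` {0..<?N})" by (simp add: image_image)
    also have "\<dots> = \<rho> ` carrier G" using xb by (simp add: bij_betw_def)
    finally show ?thesis .
  qed
  have rho_in: "\<rho> g v \<in> V'" if "g \<in> carrier G" "v \<in> V'" for g v
    using that by (auto simp: \<rho>_def V'_def)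
  have rho_mult: "\<rho> (g \<otimes>\<^bsub>G\<^esub> h) = compose V' (\<rho> g) (\<rho> h)" if "g \<in> carrier G" "h \<in> carrier G" for g h
  proof
    fix v
    show "\<rho> (g \<otimes>\<^bsub>G\<^esub> h) v = compose V' (\<rho> g) (\<rho> h) v"
    proof (cases "v \<in> V'")
      case True
      then have fv: "fst v \<in> carrier G" by (auto simp: V'_def)
      have "\<rho> h v \<in> V'" using rho_in that True by simp
      then show ?thesis using True fv that
        by (simp add: compose_def \<rho>_def G.m_assoc G.m_comm[of g h])
    next
      case False
      then show ?thesis by (simp add: compose_def \<rho>_def)
    qed
  qed
  have one0: "(\<one>\<^bsub>G\<^esub>, 0) \<in> V'" using m5 by (simp add: V'_def)
  have rho_inj: "inj_on \<rho> (carrier G)"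
  proof (rule inj_onI)
    fix g h assume g: "g \<in> carrier G" and h: "h \<in> carrier G" and e: "\<rho> g = \<rho> h"
    have "\<rho> g (\<one>\<^bsub>G\<^esub>, 0) = \<rho> h (\<one>\<^bsub>G\<^esub>, 0)" using e by simp
    then show "g = h" using one0 g h by (simp add: \<rho>_def)
  qed
  have iso: "\<rho> \<in> iso G (Aut_group V' E')"
  proof (rule isoI)
    show "\<rho> \<in> hom G (Aut_group V' E')"
    proof (rule homI)
      show "\<rho> g \<in> carrier (Aut_group V' E')" if "g \<in> carrier G" for g
        using that autsG carrier_Aut by blast
      show "\<rho> (g \<otimes>\<^bsub>G\<^esub> h) = \<rho> g \<otimes>\<^bsub>Aut_group V' E'\<^esub> \<rho> h" if "g \<in> carrier G" "h \<in> carrier G" for g h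
        using that rho_mult mult_Aut[of "\<rho> g" V' E' "\<rho> h"] autsG by auto
    qed
    show "bij_betw \<rho> (carrier G) (carrier (Aut_group V' E'))"
      using rho_inj autsG by (simp add: bij_betw_def carrier_Aut)
  qed
  have isoAG: "Aut_group V' E' \<cong> G"
    using G.iso_sym is_isoI[OF iso] by blast
  let ?H = "graph_auts V' E'"
  have Hc: "(Aut_group V' E')\<lparr>carrier := ?H\<rparr> = Aut_group V' E'"
    by (simp add: Aut_group_def)
  have sub: "subgroup ?H (Aut_group V' E')"
    using group.subgroup_self[OF group_Aut] carrier_Aut by metis
  have semi: "semiregular_on V' ?H"
    unfolding semiregular_on_def
  proof (intro ballI impI)
    fix h v assume h: "h \<in> ?H" and v: "v \<in> V'" and hv: "h v = v"
    obtain g where g: "g \<in> carrier G" "h = \<rho> g" using h autsG by blast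
    have fv: "fst v \<in> carrier G" using v by (auto simp: V'_def)
    have e: "(fst v \<otimes>\<^bsub>G\<^esub> g, snd v) = v" using hv g(2) v by (simp add: \<rho>_def)
    have "fst v \<otimes>\<^bsub>G\<^esub> g = fst v" using arg_cong[OF e, of fst] by simp
    then have g1: "g = \<one>\<^bsub>G\<^esub>" using fv g by simp
    show "h = (\<lambda>x\<in>V'. x)"
    proof
      fix y show "h y = (\<lambda>x\<in>V'. x) y"
        using g g1 by (cases "y \<in> V'") (auto simp: \<rho>_def V'_def)
    qed
  qed
  have orbit_eq: "orbit ((Aut_group V' E')\<lparr>carrier := ?H\<rparr>) (\<lambda>h v. h v) v = carrier G \<times> {snd v}"
    if v: "v \<in> V'" for v
  proof -
    have fv: "fst v \<in> carrier G" using v by (auto simp: V'_def)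
    have "orbit ((Aut_group V' E')\<lparr>carrier := ?H\<rparr>) (\<lambda>h v. h v) v = {h v | h. h \<in> \<rho> ` carrier G}"
      unfolding orbit_def using autsG by simp
    also have "\<dots> = carrier G \<times> {snd v}"
    proof
      show "{h v | h. h \<in> \<rho> ` carrier G} \<subseteq> carrier G \<times> {snd v}"
        using v fv by (auto simp: \<rho>_def)
      show "carrier G \<times> {snd v} \<subseteq> {h v | h. h \<in> \<rho> ` carrier G}"
      proof
        fix y assume "y \<in> carrier G \<times> {snd v}"
        then obtain g where g: "g \<in> carrier G" "y = (g, snd v)" by auto
        define k where "k = inv\<^bsub>G\<^esub> (fst v) \<otimes>\<^bsub>G\<^esub> g"
        have k: "k \<in> carrier G" using g fv by (simp add: k_def)
        have "fst v \<otimes>\<^bsub>G\<^esub> k = g" using g fv by (simp add: k_def G.m_assoc[symmetric])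
        then have "\<rho> k v = y" using v g by (simp add: \<rho>_def)
        then show "y \<in> {h v | h. h \<in> \<rho> ` carrier G}" using k by blast
      qed
    qed
    finally show ?thesis .
  qed
  have orbits_eq: "orbits ((Aut_group V' E')\<lparr>carrier := ?H\<rparr>) V' (\<lambda>h v. h v) = (\<lambda>i. carrier G \<times> {i}) ` {0..<m'}"
  proof -
    have "orbits ((Aut_group V' E')\<lparr>carrier := ?H\<rparr>) V' (\<lambda>h v. h v) = {carrier G \<times> {snd v} | v. v \<in> V'}"
      unfolding orbits_def by (intro Collect_cong) (metis orbit_eq)
    also have "\<dots> = (\<lambda>i. carrier G \<times> {i}) ` {0..<m'}"
    proof
      show "{carrier G \<times> {snd v} | v. v \<in> V'} \<subseteq> (\<lambda>i. carrier G \<times> {i}) ` {0..<m'}"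
        by (auto simp: V'_def)
      show "(\<lambda>i. carrier G \<times> {i}) ` {0..<m'} \<subseteq> {carrier G \<times> {snd v} | v. v \<in> V'}"
      proof
        fix S assume "S \<in> (\<lambda>i. carrier G \<times> {i}) ` {0..<m'}"
        then obtain i where i: "i < m'" "S = carrier G \<times> {i}" by auto
        then have "(\<one>\<^bsub>G\<^esub>, i) \<in> V'" by (simp add: V'_def)
        then show "S \<in> {carrier G \<times> {snd v} | v. v \<in> V'}" using i by force
      qed
    qed
    finally show ?thesis .
  qed
  have card_orbits: "card (orbits ((Aut_group V' E')\<lparr>carrier := ?H\<rparr>) V' (\<lambda>h v. h v)) = m'"
  proof -
    have "inj_on (\<lambda>i. carrier G \<times> {i}) {0..<m'}"
    proof (rule inj_onI)
      fix i j assume "carrier G \<times> {i} = carrier G \<times> {j}"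
      then have "(\<one>\<^bsub>G\<^esub>, i) \<in> carrier G \<times> {j}" by auto
      then show "i = j" by simp
    qed
    then show ?thesis unfolding orbits_eq by (simp add: card_image)
  qed
  have "is_mGRR m' G V' E'"
    unfolding is_mGRR_def
    using simple' regular' sub semi card_orbits isoAG Hc by auto
  then show ?thesis by blast
qed

theorem lemma4p7:
  fixes n m \<delta> :: nat
  assumes "n \<ge> 3" and "m \<ge> 5" and "\<delta> < n" and "coprime (1 + \<delta>) n"
  shows "graph_auts (Delta_verts n m) (Delta_adj n m \<delta>) = right_transl n m ` {0..<n}
    \<and> (\<forall>(G :: ('a, 'b) monoid_scheme) (m' :: nat).
         group G \<and> cyclic_group G \<and> finite (carrier G) \<and> card (carrier G) \<ge> 3 \<and> m' \<ge> 5 \<longrightarrow>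
         (\<exists>(V :: ('a \<times> nat) set) E. is_mGRR m' G V E))"
proof -
  have dn: "\<delta> + 1 < n"
  proof (rule ccontr)
    assume "\<not> \<delta> + 1 < n"
    then have "1 + \<delta> = n" using assms(3) by simp
    then have "coprime n n" using assms(4) by simp
    then show False using assms(1) by simp
  qed
  show ?thesis
  proof (intro conjI allI impI)
    show "graph_auts (Delta_verts n m) (Delta_adj n m \<delta>) = right_transl n m ` {0..<n}"
      by (rule auts_eq[OF assms(1) assms(2) dn])
    fix G :: "('a, 'b) monoid_scheme" and m' :: nat
    assume "group G \<and> cyclic_group G \<and> finite (carrier G) \<and> card (carrier G) \<ge> 3 \<and> m' \<ge> 5"
    then show "\<exists>(V :: ('a \<times> nat) set) E. is_mGRR m' G V E" using part2 by blast
  qed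
qed

end
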